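(* Let $\alpha=\{a_1,\dots,a_{2k}\}\subset\{1,\dots,\ell\}$ with $|\alpha|=2k\ge4$. For all positive integers $m_1,\dots,m_{2k}$, in $A(\mathcal{H}^+)$ we have $[h_{a_1}(-m_1)\cdots h_{a_{2k}}(-m_{2k})\mathbf{1}]=(-1)^{m_1+\cdots+m_{2k}}[S_\alpha]$.
   Context: $\mathfrak{h}$ is an $\ell$-dimensional complex space with orthonormal basis $h_1,\dots,h_\ell$; $\mathcal{H}=M(1,0)$ the free bosonic vertex operator algebra generated by Heisenberg modes $h(n)$ on vacuum $\mathbf{1}$; $\mathcal{H}^+$ the fixed points of the automorphism induced by $h\mapsto-h$. Zhu's algebra $A(\mathcal{H}^+)=\mathcal{H}^+/O(\mathcal{H}^+)$ with product induced by $u*v=\sum_{i\ge0}\binom{\mathrm{wt}\,u}{i}u_{i-1}v$, $O$ spanned by $u\circ v=\sum_{i\ge0}\binom{\mathrm{wt}\,u}{i}u_{i-2}v$; $[u]$ the class of $u$. For distinct $a,b$, $S_{ab}=h_a(-1)h_b(-1)\mathbf{1}$; writing $\alpha$ as a disjoint union of two-element sets $\alpha_1\cup\cdots\cup\alpha_k$, $S_\alpha=S_{\alpha_1}*\cdots*S_{\alpha_k}$ (with $S_{\{a,b\}}=S_{ab}$). *)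

theory Defs
  imports Complex_Main "HOL-Library.Multiset" "HOL-Library.Product_Lexorder"
    "HOL-Library.Function_Algebras"
begin

text \<open>Fock space model of M(1,0): a basis monomial
  h_{a_1}(-n_1)...h_{a_r}(-n_r)1 (n_i >= 1) is the multiset of pairs (a_i,n_i);
  a vector is a (finitely supported) coefficient function.\<close>

type_synonym mono = "(nat \<times> nat) multiset"
type_synonym vec = "mono \<Rightarrow> complex"

definition supp :: "vec \<Rightarrow> mono set" where
  "supp v = {M. v M \<noteq> 0}"

definition bvec :: "mono \<Rightarrow> vec" where
  "bvec M = (\<lambda>N. if N = M then 1 else 0)"

definition vac :: vec where "vac = bvec {#}"

definition smul :: "complex \<Rightarrow> vec \<Rightarrow> vec" where
  "smul c v = (\<lambda>N. c * v N)"

text \<open>Heisenberg mode h_a(n) on M(1,0), with [h_a(m),h_b(n)] = m delta_ab delta_{m+n,0}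
  and h_a(0) = 0 on M(1,0).\<close>
definition hop :: "nat \<Rightarrow> int \<Rightarrow> vec \<Rightarrow> vec" where
  "hop a n v =
    (if n < 0 then (\<lambda>N. if (a, nat (-n)) \<in># N then v (N - {#(a, nat (-n))#}) else 0)
     else if n > 0 then (\<lambda>N. of_int n * of_nat (count (N + {#(a, nat n)#}) (a, nat n))
                               * v (N + {#(a, nat n)#}))
     else 0)"

definition wt :: "mono \<Rightarrow> nat" where
  "wt M = sum_mset (image_mset snd M)"

text \<open>Modes u_q v of basis vectors, via the iterate (Borcherds) formula
  (h(-n)w)_q = sum_j binom(-n,j) (-1)^j (h(-n-j) w_{q+j} - (-1)^n w_{-n+q-j} h(j)),
  with 1_q = delta_{q,-1}.  The sum over j is finite; only terms with
  j <= wt w + wt v + |q| can be nonzero, so we truncate there.\<close>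
function modeB :: "mono \<Rightarrow> int \<Rightarrow> mono \<Rightarrow> vec" where
  "modeB M q N =
    (if M = {#} then (if q = -1 then bvec N else 0)
     else (let x = Max (set_mset M); a = fst x; n = snd x; W = M - {#x#} in
       (\<Sum>j\<in>{0..wt W + wt N + nat \<bar>q\<bar>}.
          smul ((of_int (- int n) gchoose j) * (-1) ^ j)
            (hop a (- int n - int j) (modeB W (q + int j) N)
             - smul ((-1) ^ n)
                 (if j = 0 then 0
                  else smul (of_nat j * of_nat (count N (a, j)))
                         (modeB W (- int n + q - int j) (N - {#(a, j)#})))))))"
  by auto
termination
  by (relation "measure (\<lambda>(M, q, N). size M)")
     (auto simp: size_Diff1_less)

definition mode :: "vec \<Rightarrow> int \<Rightarrow> vec \<Rightarrow> vec" where
  "mode u q v = (\<Sum>M\<in>supp u. \<Sum>N\<in>supp v. smul (u M * v N) (modeB M q N))"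

text \<open>Zhu's product and circle product, for homogeneous u (wt u = wt M), extended bilinearly.\<close>
definition zstarB :: "mono \<Rightarrow> mono \<Rightarrow> vec" where
  "zstarB M N = (\<Sum>i\<in>{0..wt M}. smul (of_nat (wt M choose i)) (modeB M (int i - 1) N))"

definition zcircB :: "mono \<Rightarrow> mono \<Rightarrow> vec" where
  "zcircB M N = (\<Sum>i\<in>{0..wt M}. smul (of_nat (wt M choose i)) (modeB M (int i - 2) N))"

definition zstar :: "vec \<Rightarrow> vec \<Rightarrow> vec" where
  "zstar u v = (\<Sum>M\<in>supp u. \<Sum>N\<in>supp v. smul (u M * v N) (zstarB M N))"

definition zcirc :: "vec \<Rightarrow> vec \<Rightarrow> vec" where
  "zcirc u v = (\<Sum>M\<in>supp u. \<Sum>N\<in>supp v. smul (u M * v N) (zcircB M N))"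

definition fock :: "nat \<Rightarrow> vec set" where
  "fock l = {v. finite (supp v) \<and>
     (\<forall>M\<in>supp v. \<forall>x\<in>#M. 1 \<le> fst x \<and> fst x \<le> l \<and> 1 \<le> snd x)}"

text \<open>theta acts by (-1)^(length) on monomials.\<close>
definition Hplus :: "nat \<Rightarrow> vec set" where
  "Hplus l = {v \<in> fock l. \<forall>M. odd (size M) \<longrightarrow> v M = 0}"

inductive_set Ospace :: "nat \<Rightarrow> vec set" for l where
  zero: "0 \<in> Ospace l"
| circ: "u \<in> Hplus l \<Longrightarrow> v \<in> Hplus l \<Longrightarrow> zcirc u v \<in> Ospace l"
| add: "x \<in> Ospace l \<Longrightarrow> y \<in> Ospace l \<Longrightarrow> x + y \<in> Ospace l"
| scale: "x \<in> Ospace l \<Longrightarrow> smul c x \<in> Ospace l"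

definition zhu_eq :: "nat \<Rightarrow> vec \<Rightarrow> vec \<Rightarrow> bool" where
  "zhu_eq l x y \<longleftrightarrow> x - y \<in> Ospace l"

definition Sab :: "nat \<Rightarrow> nat \<Rightarrow> vec" where
  "Sab a b = hop a (-1) (hop b (-1) vac)"

definition Salpha :: "(nat \<times> nat) list \<Rightarrow> vec" where
  "Salpha P = foldl (\<lambda>acc p. zstar acc (Sab (fst p) (snd p)))
                (Sab (fst (hd P)) (snd (hd P))) (tl P)"

definition hmono :: "(nat \<Rightarrow> nat) \<Rightarrow> (nat \<Rightarrow> nat) \<Rightarrow> nat \<Rightarrow> vec" where
  "hmono a m r = foldr (\<lambda>i v. hop (a i) (- int (m i)) v) [0..<r] vac"

end

theory Submission
  imports Defs
begin

declare modeB.simps[simp del]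

lemma smul_zero[simp]: "smul c 0 = 0" by (simp add: smul_def zero_fun_def)
lemma smul_one[simp]: "smul 1 v = v" by (simp add: smul_def)
lemma smul_zero_c[simp]: "smul 0 v = 0" by (simp add: smul_def zero_fun_def)
lemma hop_zero[simp]: "hop a k 0 = 0" by (simp add: hop_def zero_fun_def fun_eq_iff)

lemma hop_add: "hop a k (u + v) = hop a k u + hop a k v"
  by (auto simp: hop_def fun_eq_iff algebra_simps)
lemma hop_smul: "hop a k (smul c v) = smul c (hop a k v)"
  by (auto simp: hop_def fun_eq_iff smul_def algebra_simps)

lemma hop_sum_mset: "hop a k (sum_mset (image_mset f M)) = sum_mset (image_mset (\<lambda>x. hop a k (f x)) M)"
  by (induction M) (simp_all only: image_mset_add_mset sum_mset.add_mset hop_add image_mset_empty sum_mset.empty hop_zero)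

lemma hop_neg_bvec: "1 \<le> n \<Longrightarrow> hop a (- int n) (bvec N) = bvec (add_mset (a, n) N)"
  by (auto simp: hop_def bvec_def fun_eq_iff)

lemma supp_bvec[simp]: "supp (bvec M) = {M}" by (auto simp: supp_def bvec_def)

definition up :: "nat \<times> nat \<Rightarrow> nat \<times> nat" where "up x = (fst x, Suc (snd x))"

definition DD :: "mono \<Rightarrow> mono \<Rightarrow> vec" where
  "DD M N = sum_mset (image_mset (\<lambda>x. smul (of_nat (snd x)) (bvec (add_mset (up x) (M - {#x#}) + N))) M)"

lemma wt_add[simp]: "wt (add_mset x M) = snd x + wt M" by (simp add: wt_def)
lemma wt_empty[simp]: "wt {#} = 0" by (simp add: wt_def)

lemma sum_two: "finite A \<Longrightarrow> ia \<in> A \<Longrightarrow> ib \<in> A \<Longrightarrow> ia \<noteq> ib \<Longrightarrow> (\<forall>j\<in>A. j \<noteq> ia \<longrightarrow> j \<noteq> ib \<longrightarrow> f j = 0)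
  \<Longrightarrow> sum f A = f ia + (f ib :: 'b::comm_monoid_add)"
proof -
  assume h: "finite A" "ia \<in> A" "ib \<in> A" "ia \<noteq> ib" "\<forall>j\<in>A. j \<noteq> ia \<longrightarrow> j \<noteq> ib \<longrightarrow> f j = 0"
  have "sum f A = sum f {ia, ib}"
    by (rule sum.mono_neutral_right) (use h in auto)
  thus ?thesis using h by simp
qed

lemma sum_one: "finite A \<Longrightarrow> ia \<in> A \<Longrightarrow> (\<forall>j\<in>A. j \<noteq> ia \<longrightarrow> f j = 0)
  \<Longrightarrow> sum f A = (f ia :: 'b::comm_monoid_add)"
proof -
  assume h: "finite A" "ia \<in> A" "\<forall>j\<in>A. j \<noteq> ia \<longrightarrow> f j = 0"
  have "sum f A = sum f {ia}"
    by (rule sum.mono_neutral_right) (use h in auto)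
  thus ?thesis using h by simp
qed

lemma modeB_disj:
  assumes "\<forall>x\<in>#M. \<forall>y\<in>#N. fst x \<noteq> fst y" "\<forall>x\<in>#M. 1 \<le> snd x"
  shows "(\<forall>q\<ge>0. modeB M q N = 0) \<and> modeB M (-1) N = bvec (M + N) \<and> modeB M (-2) N = DD M N"
  using assms
proof (induction "size M" arbitrary: M rule: less_induct)
  case less
  show ?case
  proof (cases "M = {#}")
    case True
    then show ?thesis by (simp add: modeB.simps[of "{#}"] DD_def)
  next
    case False
    define x where "x = Max (set_mset M)"
    define W where "W = M - {#x#}"
    obtain a n where xan: "x = (a, n)" by (cases x)
    have xM: "x \<in># M" using False x_def by simp
    have MW: "M = add_mset x W" using xM W_def by simp
    have sW: "size W < size M" using MW by simp
    have dW: "\<forall>x\<in>#W. \<forall>y\<in>#N. fst x \<noteq> fst y" using less.prems MW by auto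
    have pW: "\<forall>x\<in>#W. 1 \<le> snd x" using less.prems MW by auto
    have n1: "1 \<le> n" using less.prems xM xan by auto
    note IH = less.hyps[OF sW dW pW]
    have cnt: "count N (a, j) = 0" for j
      using less.prems xM xan by (metis count_inI fst_conv)
    have unf: "modeB M q N = (\<Sum>j\<in>{0..wt W + wt N + nat \<bar>q\<bar>}.
          smul ((of_int (- int n) gchoose j) * (-1) ^ j)
            (hop a (- int n - int j) (modeB W (q + int j) N)))" for q
      apply (rule trans[OF modeB.simps])
      apply (simp only: False Let_def x_def[symmetric] xan W_def[unfolded xan, symmetric] if_False fst_conv snd_conv)
      apply (rule sum.cong, rule refl)
      apply (simp add: cnt)
      done
    have P1: "\<forall>q\<ge>0. modeB M q N = 0"
    proof (intro allI impI)
      fix q :: int assume "q \<ge> 0"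
      then show "modeB M q N = 0" unfolding unf using IH by (intro sum.neutral) auto
    qed
    have P2: "modeB M (-1) N = bvec (M + N)"
      unfolding unf
      apply (subst sum_one[where ia=0])
      using IH n1 by (auto simp: hop_neg_bvec MW xan)
    have P3: "modeB M (-2) N = DD M N"
      unfolding unf
      apply (subst sum_two[where ia=0 and ib=1])
      using IH apply (auto)[5]
      using IH n1 apply (simp add: hop_neg_bvec)
    proof -
      have e1: "hop a (- int n - 1) (bvec (W + N)) = bvec (add_mset (a, Suc n) (W + N))"
      proof -
        have "- int n - 1 = - int (Suc n)" by simp
        thus ?thesis by (subst \<open>- int n - 1 = - int (Suc n)\<close>) (rule hop_neg_bvec; simp)
      qed
      have e2: "hop a (- int n) (DD W N) = sum_mset (image_mset (\<lambda>y. smul (of_nat (snd y)) (bvec (add_mset (up y) (add_mset x W - {#y#}) + N))) W)"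
        unfolding DD_def hop_sum_mset hop_smul
        apply (rule arg_cong[where f=sum_mset])
        apply (rule image_mset_cong)
        using n1 by (simp add: hop_neg_bvec xan add_mset_commute)
      show "hop a (- int n) (DD W N) + smul (complex_of_nat n) (hop a (- int n - 1) (bvec (W + N))) = DD M N"
        unfolding e1 e2 by (simp add: MW DD_def xan up_def add.commute)
    qed
    show ?thesis using P1 P2 P3 by blast
  qed
qed

lemma zstar_bvec: "zstar (bvec M) (bvec N) = zstarB M N"
  unfolding zstar_def supp_bvec by (simp add: bvec_def)
lemma zcirc_bvec: "zcirc (bvec M) (bvec N) = zcircB M N"
  unfolding zcirc_def supp_bvec by (simp add: bvec_def)

lemma zstarB_disj:
  assumes "\<forall>x\<in>#M. \<forall>y\<in>#N. fst x \<noteq> fst y" "\<forall>x\<in>#M. 1 \<le> snd x"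
  shows "zstarB M N = bvec (M + N)"
proof -
  note D = modeB_disj[OF assms]
  show ?thesis unfolding zstarB_def
    apply (subst sum_one[where ia=0])
    using D by auto
qed

lemma zcircB_disj:
  assumes "\<forall>x\<in>#M. \<forall>y\<in>#N. fst x \<noteq> fst y" "\<forall>x\<in>#M. 1 \<le> snd x" "1 \<le> wt M"
  shows "zcircB M N = DD M N + smul (of_nat (wt M)) (bvec (M + N))"
proof -
  note D = modeB_disj[OF assms(1,2)]
  show ?thesis unfolding zcircB_def
    apply (subst sum_two[where ia=0 and ib=1])
    using D assms(3) by auto
qed

lemma Ospace_diff: "x \<in> Ospace l \<Longrightarrow> y \<in> Ospace l \<Longrightarrow> x - y \<in> Ospace l"
proof -
  assume "x \<in> Ospace l" "y \<in> Ospace l"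
  then have "x + smul (-1) y \<in> Ospace l" by (intro Ospace.add Ospace.scale)
  moreover have "x + smul (-1) y = x - y" by (simp add: smul_def fun_eq_iff)
  ultimately show ?thesis by simp
qed

lemma bvec_Hplus: "(\<forall>x\<in>#M. 1 \<le> fst x \<and> fst x \<le> l \<and> 1 \<le> snd x) \<Longrightarrow> even (size M) \<Longrightarrow> bvec M \<in> Hplus l"
  by (simp add: Hplus_def fock_def) (simp add: bvec_def)

lemma pair_rel:
  assumes "\<forall>w\<in>#add_mset x (add_mset y N). 1 \<le> fst w \<and> fst w \<le> l \<and> 1 \<le> snd w"
    "even (size N)" "\<forall>w\<in>#N. fst w \<noteq> fst x \<and> fst w \<noteq> fst y"
  shows "smul (of_nat (snd x)) (bvec (add_mset (up x) (add_mset y N)))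
       + smul (of_nat (snd y)) (bvec (add_mset x (add_mset (up y) N)))
       + smul (of_nat (snd x + snd y)) (bvec (add_mset x (add_mset y N))) \<in> Ospace l"
proof -
  have h1: "bvec {#x, y#} \<in> Hplus l" using assms(1) by (intro bvec_Hplus) auto
  have h2: "bvec N \<in> Hplus l" using assms(1,2) by (intro bvec_Hplus) auto
  have "zcirc (bvec {#x, y#}) (bvec N) \<in> Ospace l" using h1 h2 by (rule Ospace.circ)
  moreover have "zcirc (bvec {#x, y#}) (bvec N) = DD {#x, y#} N + smul (of_nat (wt {#x, y#})) (bvec ({#x, y#} + N))"
    unfolding zcirc_bvec using assms by (intro zcircB_disj) auto
  moreover have "DD {#x, y#} N + smul (of_nat (wt {#x, y#})) (bvec ({#x, y#} + N)) =
     smul (of_nat (snd x)) (bvec (add_mset (up x) (add_mset y N)))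
       + smul (of_nat (snd y)) (bvec (add_mset x (add_mset (up y) N)))
       + smul (of_nat (snd x + snd y)) (bvec (add_mset x (add_mset y N)))"
    by (simp add: DD_def add_mset_commute)
  ultimately show ?thesis by simp
qed

lemma key_rel:
  assumes "\<forall>w\<in>#add_mset x (add_mset y (add_mset z R)). 1 \<le> fst w \<and> fst w \<le> l \<and> 1 \<le> snd w"
    "odd (size R)" "fst x \<noteq> fst y" "fst x \<noteq> fst z" "fst y \<noteq> fst z"
    "\<forall>w\<in>#R. fst w \<noteq> fst x \<and> fst w \<noteq> fst y \<and> fst w \<noteq> fst z"
  shows "bvec (add_mset (up x) (add_mset y (add_mset z R))) + bvec (add_mset x (add_mset y (add_mset z R))) \<in> Ospace l"
proof -
  define A where "A = bvec (add_mset (up x) (add_mset y (add_mset z R)))"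
  define B where "B = bvec (add_mset x (add_mset (up y) (add_mset z R)))"
  define C where "C = bvec (add_mset x (add_mset y (add_mset (up z) R)))"
  define Z where "Z = bvec (add_mset x (add_mset y (add_mset z R)))"
  define sx where "sx = (of_nat (snd x) :: complex)"
  define sy where "sy = (of_nat (snd y) :: complex)"
  define sz where "sz = (of_nat (snd z) :: complex)"
  have R1: "smul sx A + smul sy B + smul (sx + sy) Z \<in> Ospace l"
    using pair_rel[of x y "add_mset z R" l] assms
    unfolding A_def B_def Z_def sx_def sy_def by (simp add: add_mset_commute)
  have R2: "smul sx A + smul sz C + smul (sx + sz) Z \<in> Ospace l"
    using pair_rel[of x z "add_mset y R" l] assms
    unfolding A_def C_def Z_def sx_def sz_def by (simp add: add_mset_commute)
  have R3: "smul sy B + smul sz C + smul (sy + sz) Z \<in> Ospace l"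
    using pair_rel[of y z "add_mset x R" l] assms
    unfolding B_def C_def Z_def sy_def sz_def by (simp add: add_mset_commute)
  have sx0: "sx \<noteq> 0" using assms(1) unfolding sx_def by auto
  have "A + Z = smul (1 / (2 * sx)) ((smul sx A + smul sy B + smul (sx + sy) Z) + (smul sx A + smul sz C + smul (sx + sz) Z)
     - (smul sy B + smul sz C + smul (sy + sz) Z))"
    using sx0 by (simp add: fun_eq_iff smul_def field_simps)
  moreover have "\<dots> \<in> Ospace l" by (rule Ospace.scale, rule Ospace_diff[OF Ospace.add[OF R1 R2] R3])
  ultimately show ?thesis unfolding A_def Z_def by simp
qed

definition dfst :: "mono \<Rightarrow> bool" where "dfst T \<longleftrightarrow> (\<forall>a. count (image_mset fst T) a \<le> 1)"

lemma dfst_add: "dfst (add_mset w M) \<longleftrightarrow> (\<forall>v\<in>#M. fst v \<noteq> fst w) \<and> dfst M"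
proof
  assume h: "dfst (add_mset w M)"
  have c: "count (image_mset fst M) a \<le> count (image_mset fst (add_mset w M)) a" for a by simp
  have "count (image_mset fst M) (fst w) = 0"
    using h unfolding dfst_def by (drule_tac x="fst w" in spec) simp
  then have "\<forall>v\<in>#M. fst v \<noteq> fst w" by (fastforce simp: count_eq_zero_iff image_iff)
  moreover have "dfst M" using h c unfolding dfst_def by (meson le_trans)
  ultimately show "(\<forall>v\<in>#M. fst v \<noteq> fst w) \<and> dfst M" by blast
next
  assume h: "(\<forall>v\<in>#M. fst v \<noteq> fst w) \<and> dfst M"
  then have "count (image_mset fst M) (fst w) = 0" by (auto simp: count_eq_zero_iff)
  with h show "dfst (add_mset w M)" unfolding dfst_def by auto
qed

lemma dfst_empty[simp]: "dfst {#}" by (simp add: dfst_def)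

lemma wt_ones: "(\<forall>x\<in>#T. snd x = 1) \<Longrightarrow> wt T = size T"
  by (induction T) auto

lemma zhu_refl: "zhu_eq l x x" by (simp add: zhu_eq_def Ospace.zero)

lemma reduce:
  assumes "\<forall>x\<in>#T. 1 \<le> fst x \<and> fst x \<le> l \<and> 1 \<le> snd x" "dfst T" "even (size T)" "3 \<le> size T"
  shows "zhu_eq l (bvec T) (smul ((-1) ^ wt T) (bvec (image_mset (\<lambda>x. (fst x, 1)) T)))"
  using assms
proof (induction "wt T" arbitrary: T rule: less_induct)
  case less
  show ?case
  proof (cases "\<forall>x\<in>#T. snd x = 1")
    case True
    have i: "image_mset (\<lambda>x. (fst x, 1)) T = image_mset (\<lambda>x. x) T"
      by (rule image_mset_cong) (use True in \<open>auto simp: prod_eq_iff\<close>)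
    have "even (wt T)" using wt_ones[OF True] less.prems by simp
    then have "((-1::complex) ^ wt T) = 1" by simp
    then show ?thesis using i by (simp add: zhu_refl)
  next
    case False
    then obtain x where xT: "x \<in># T" and sx: "snd x \<noteq> 1" by auto
    have sx2: "2 \<le> snd x" using sx less.prems(1) xT by fastforce
    define x' where "x' = (fst x, snd x - 1)"
    have upx: "up x' = x" using sx2 by (simp add: up_def x'_def)
    define R0 where "R0 = T - {#x#}"
    have TR: "T = add_mset x R0" using xT R0_def by simp
    have "size R0 \<ge> 2" using less.prems(4) TR by simp
    then obtain y R1 where R1: "R0 = add_mset y R1"
      by (metis multiset_cases size_empty not_numeral_le_zero)
    have "size R1 \<ge> 1" using \<open>size R0 \<ge> 2\<close> R1 by simp
    then obtain z R where R: "R1 = add_mset z R"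
      by (metis multiset_cases size_empty not_one_le_zero)
    define T' where "T' = add_mset x' R0"
    have d: "(\<forall>v\<in>#add_mset y (add_mset z R). fst v \<noteq> fst x) \<and> (\<forall>v\<in>#add_mset z R. fst v \<noteq> fst y)
          \<and> (\<forall>v\<in>#R. fst v \<noteq> fst z)"
      using less.prems(2) unfolding TR R1 R dfst_add by blast
    have key: "bvec T + bvec T' \<in> Ospace l"
      using key_rel[of x' y z R l] less.prems d sx2 unfolding T'_def TR R1 R upx
      by (auto simp: x'_def)
    have wtT: "wt T = wt T' + 1" using sx2 unfolding TR T'_def x'_def by simp
    have p1: "\<forall>x\<in>#T'. 1 \<le> fst x \<and> fst x \<le> l \<and> 1 \<le> snd x"
      using less.prems(1) sx2 unfolding TR T'_def x'_def by auto
    have p2: "dfst T'" using less.prems(2) unfolding TR T'_def dfst_add x'_def by simp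
    have IH: "zhu_eq l (bvec T') (smul ((-1) ^ wt T') (bvec (image_mset (\<lambda>x. (fst x, 1)) T')))"
      using less.hyps[of T'] wtT p1 p2 less.prems(3,4) unfolding TR T'_def by simp
    have im: "image_mset (\<lambda>x. (fst x, 1::nat)) T' = image_mset (\<lambda>x. (fst x, 1)) T"
      unfolding TR T'_def x'_def by simp
    define V where "V = bvec (image_mset (\<lambda>x. (fst x, 1::nat)) T)"
    have eq: "bvec T - smul ((-1) ^ wt T) V = (bvec T + bvec T') - (bvec T' - smul ((-1) ^ wt T') V)"
      unfolding wtT by (simp add: fun_eq_iff smul_def)
    have mem: "(bvec T + bvec T') - (bvec T' - smul ((-1) ^ wt T') V) \<in> Ospace l" using IH im unfolding zhu_eq_def V_def
      by (intro Ospace_diff[OF key]) simp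
    show ?thesis unfolding zhu_eq_def V_def[symmetric] by (subst eq) (rule mem)
  qed
qed

lemma foldr_hop: "\<forall>i\<in>set xs. 1 \<le> m i \<Longrightarrow>
  foldr (\<lambda>i v. hop (a i) (- int (m i)) v) xs (bvec N) = bvec (N + mset (map (\<lambda>i. (a i, m i)) xs))"
  by (induction xs) (auto simp: hop_neg_bvec)

lemma hmono_bvec: "\<forall>i<r. 1 \<le> m i \<Longrightarrow> hmono a m r = bvec (mset (map (\<lambda>i. (a i, m i)) [0..<r]))"
  unfolding hmono_def vac_def by (subst foldr_hop) auto

lemma Sab_bvec: "Sab a b = bvec {#(a, 1), (b, 1)#}"
  using hop_neg_bvec[of 1] by (simp add: Sab_def vac_def add_mset_commute)

definition pl :: "(nat \<times> nat) list \<Rightarrow> nat list" where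
  "pl P = concat (map (\<lambda>p. [fst p, snd p]) P)"

lemma pl_simps[simp]: "pl [] = []" "pl (q # Q) = fst q # snd q # pl Q" by (auto simp: pl_def)

lemma foldl_S:
  "distinct (pl Q) \<Longrightarrow> (\<forall>w\<in>#M. fst w \<notin> set (pl Q)) \<Longrightarrow> (\<forall>w\<in>#M. 1 \<le> snd w) \<Longrightarrow>
   foldl (\<lambda>acc p. zstar acc (Sab (fst p) (snd p))) (bvec M) Q = bvec (M + mset (map (\<lambda>x. (x, 1)) (pl Q)))"
proof (induction Q arbitrary: M)
  case Nil
  then show ?case by simp
next
  case (Cons q Q)
  have "zstar (bvec M) (Sab (fst q) (snd q)) = bvec (M + {#(fst q, 1), (snd q, 1)#})"
    unfolding Sab_bvec zstar_bvec using Cons.prems by (intro zstarB_disj) auto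
  moreover have "foldl (\<lambda>acc p. zstar acc (Sab (fst p) (snd p))) (bvec (M + {#(fst q, 1), (snd q, 1)#})) Q
     = bvec (M + {#(fst q, 1), (snd q, 1)#} + mset (map (\<lambda>x. (x, 1)) (pl Q)))"
    using Cons.prems by (intro Cons.IH) auto
  ultimately show ?case by (simp add: add_mset_commute)
qed

lemma Salpha_bvec: "P \<noteq> [] \<Longrightarrow> distinct (pl P) \<Longrightarrow> Salpha P = bvec (mset (map (\<lambda>x. (x, 1)) (pl P)))"
proof (cases P)
  case (Cons p Q)
  assume d: "distinct (pl P)"
  have "Salpha P = foldl (\<lambda>acc p. zstar acc (Sab (fst p) (snd p))) (bvec {#(fst p, 1), (snd p, 1)#}) Q"
    by (simp add: Salpha_def Cons Sab_bvec)
  also have "\<dots> = bvec ({#(fst p, 1), (snd p, 1)#} + mset (map (\<lambda>x. (x, 1)) (pl Q)))"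
    using d by (intro foldl_S) (auto simp: Cons)
  finally show ?thesis by (simp add: Cons)
qed simp

theorem lemma4p1p10:
  fixes l k :: nat and a m :: "nat \<Rightarrow> nat" and P :: "(nat \<times> nat) list"
  assumes "2 \<le> k"
    and "\<forall>i<2*k. 1 \<le> a i \<and> a i \<le> l"
    and "inj_on a {..<2*k}"
    and "\<forall>i<2*k. 1 \<le> m i"
    and "length P = k"
    and "\<forall>p\<in>set P. fst p \<noteq> snd p"
    and "(\<Union>p\<in>set P. {fst p, snd p}) = a ` {..<2*k}"
  shows "zhu_eq l (hmono a m (2*k)) (smul ((-1) ^ (\<Sum>i<2*k. m i)) (Salpha P))"
proof -
  define T where "T = mset (map (\<lambda>i. (a i, m i)) [0..<2*k])"
  have H: "hmono a m (2*k) = bvec T" unfolding T_def using assms(4) by (rule hmono_bvec)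
  have setpl: "set (pl P) = a ` {..<2*k}" using assms(7) by (auto simp: pl_def)
  have lenpl: "length (pl P) = 2 * k" using assms(5) unfolding pl_def
    by (induction P arbitrary: k) auto
  have da: "distinct (map a [0..<2*k])" using assms(3) by (simp add: distinct_map atLeast0LessThan)
  have "card (set (pl P)) = 2 * k" unfolding setpl using assms(3) by (simp add: card_image)
  then have dpl: "distinct (pl P)" using lenpl by (intro card_distinct) simp
  have Pne: "P \<noteq> []" using assms(1,5) by auto
  have S: "Salpha P = bvec (mset (map (\<lambda>x. (x, 1)) (pl P)))" using Salpha_bvec[OF Pne dpl] .
  have ms: "mset (map a [0..<2*k]) = mset (pl P)"
    using set_eq_iff_mset_eq_distinct[OF da dpl] setpl by (simp add: atLeast0LessThan)
  have imT: "image_mset (\<lambda>x. (fst x, 1)) T = mset (map (\<lambda>x. (x, 1)) (pl P))"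
  proof -
    have "image_mset (\<lambda>x. (fst x, 1)) T = image_mset (\<lambda>x. (x, 1)) (mset (map a [0..<2*k]))"
      by (simp add: T_def multiset.map_comp comp_def)
    also have "\<dots> = mset (map (\<lambda>x. (x, 1)) (pl P))" by (metis ms mset_map)
    finally show ?thesis .
  qed
  have wtT: "wt T = (\<Sum>i<2*k. m i)"
    by (simp add: T_def wt_def multiset.map_comp comp_def atLeast0LessThan sum_unfold_sum_mset)
  have dT: "dfst T" unfolding dfst_def T_def using da
    by (simp add: distinct_count_atmost_1 multiset.map_comp comp_def)
  have R: "zhu_eq l (bvec T) (smul ((-1) ^ wt T) (bvec (image_mset (\<lambda>x. (fst x, 1)) T)))"
    using assms(1,2,4) dT by (intro reduce) (auto simp: T_def)
  show ?thesis using R unfolding H S imT wtT .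
qed

end
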